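(* Let $\beta\in(1,2)$, let $\tau>0$, $t_k=k\tau$, and let $n\ge 1$. Suppose $v\in C^{2}[0,t_n]\cap C^{3}(0,t_n]$ with $|v'''|\in L^1(0,t_n]$, and write $v^k=v(t_k)$. Define $$b_0^{(\beta)}=\frac{1}{\Gamma(3-\beta)},\qquad b_k^{(\beta)}=\frac{1}{\Gamma(3-\beta)}\big[(k+1)^{2-\beta}-k^{2-\beta}\big],\quad k\ge1,$$ and $$\Delta_t^{\beta}v^n=\frac{1}{\tau^{\beta}}\Big[\sum_{k=2}^{n} b_{n-k}^{(\beta)}\big(v^k-2v^{k-1}+v^{k-2}\big)+2b_{n-1}^{(\beta)}\big(v^1-v^0\big)\Big]$$ (the sum being empty when $n=1$). Then $$ {}_0^CD_t^{\beta}v(t_n)=\Delta_t^{\beta}v^n-2\,\frac{b_{n-1}^{(\beta)}}{\tau^{\beta-1}}\,v'(t_0)+R_2[v(t_n)],$$ where $$|R_2[v(t_n)]|\le \frac{9\,t_n^{2-\beta}}{\Gamma(3-\beta)}\max_{0\le k\le n-1}\int_0^1|v'''(t_k+\theta\tau)|\,d\theta\cdot\tau .$$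
   Context: For $\beta\in(1,2)$, the Caputo fractional derivative of order $\beta$ is ${}_0^CD_t^{\beta}v(t)=\frac{1}{\Gamma(2-\beta)}\int_0^t \frac{v''(s)}{(t-s)^{\beta-1}}\,ds$, and $t_0=0$. *)

theory Defs
  imports "HOL-Analysis.Analysis"
begin

text \<open>Caputo derivative of order beta in (1,2), with lower limit 0, expressed through
  the second derivative v2 = v'' of the function:
  (1/Gamma(2-beta)) * integral over [0,t] of v''(s) (t-s)^(1-beta) ds.\<close>
definition caputo_D :: "real \<Rightarrow> (real \<Rightarrow> real) \<Rightarrow> real \<Rightarrow> real" where
  "caputo_D \<beta> v2 t = (1 / Gamma (2 - \<beta>)) *
      (LINT s:{0..t}|lborel. v2 s / (t - s) powr (\<beta> - 1))"

definition b_coef :: "real \<Rightarrow> nat \<Rightarrow> real" where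
  "b_coef \<beta> k = (if k = 0 then 1 / Gamma (3 - \<beta>)
     else (1 / Gamma (3 - \<beta>)) * ((real k + 1) powr (2 - \<beta>) - (real k) powr (2 - \<beta>)))"

definition Delta_t :: "real \<Rightarrow> real \<Rightarrow> (real \<Rightarrow> real) \<Rightarrow> nat \<Rightarrow> real" where
  "Delta_t \<beta> \<tau> v n = (1 / \<tau> powr \<beta>) *
     ((\<Sum>k=2..n. b_coef \<beta> (n - k) *
          (v (real k * \<tau>) - 2 * v (real (k - 1) * \<tau>) + v (real (k - 2) * \<tau>)))
      + 2 * b_coef \<beta> (n - 1) * (v \<tau> - v 0))"

end

theory Submission
  imports Defs
begin

locale L2 =
  fixes \<beta> \<tau> :: real and n :: nat and v v1 v2 v3 :: "real \<Rightarrow> real"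
  assumes beta1: "1 < \<beta>" and beta2: "\<beta> < 2"
    and tau: "\<tau> > 0"
    and n: "n \<ge> 1"
    and d1: "\<And>t. t \<in> {0..real n * \<tau>} \<Longrightarrow>
               (v has_real_derivative v1 t) (at t within {0..real n * \<tau>})"
    and d2: "\<And>t. t \<in> {0..real n * \<tau>} \<Longrightarrow>
               (v1 has_real_derivative v2 t) (at t within {0..real n * \<tau>})"
    and c2: "continuous_on {0..real n * \<tau>} v2"
    and d3: "\<And>t. t \<in> {0<..real n * \<tau>} \<Longrightarrow>
               (v2 has_real_derivative v3 t) (at t within {0<..real n * \<tau>})"
    and c3: "continuous_on {0<..real n * \<tau>} v3"
    and L1: "set_integrable lborel {0<..real n * \<tau>} (\<lambda>t. \<bar>v3 t\<bar>)"
begin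

abbreviation "T \<equiv> real n * \<tau>"

lemma T_pos: "T > 0" using n tau by simp

lemma cont_v: "continuous_on {0..T} v"
  by (rule DERIV_continuous_on[OF d1])

lemma cont_v1: "continuous_on {0..T} v1"
  by (rule DERIV_continuous_on[OF d2])

lemma der_v: assumes "0 < t" "t < T" shows "(v has_real_derivative v1 t) (at t)"
proof -
  have "(v has_real_derivative v1 t) (at t within {0<..<T})"
    by (rule has_field_derivative_subset[OF d1]) (use assms in auto)
  thus ?thesis using at_within_open[of t "{0<..<T}"] assms by simp
qed

lemma der_v1: assumes "0 < t" "t < T" shows "(v1 has_real_derivative v2 t) (at t)"
proof -
  have "(v1 has_real_derivative v2 t) (at t within {0<..<T})"
    by (rule has_field_derivative_subset[OF d2]) (use assms in auto)
  thus ?thesis using at_within_open[of t "{0<..<T}"] assms by simp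
qed

lemma mvt_v1:
  assumes "0 \<le> a" "a < b" "b \<le> T"
  shows "\<exists>\<xi>. a < \<xi> \<and> \<xi> < b \<and> v1 b - v1 a = (b - a) * v2 \<xi>"
proof -
  have "continuous_on {a..b} v1" by (rule continuous_on_subset[OF cont_v1]) (use assms in auto)
  moreover have "v1 differentiable (at x)" if "a < x" "x < b" for x
    using der_v1[of x] that assms real_differentiable_def by force
  ultimately obtain l z where z: "a < z" "z < b" "DERIV v1 z :> l" "v1 b - v1 a = (b - a) * l"
    using MVT[OF \<open>a < b\<close>] by blast
  have "l = v2 z" using DERIV_unique[OF z(3) der_v1[of z]] z assms by auto
  thus ?thesis using z by blast
qed

lemma taylor2:
  assumes "0 < h" "h \<le> T"
  shows "\<exists>\<xi>. 0 < \<xi> \<and> \<xi> < h \<and> 2 * (v h - v 0 - h * v1 0) = h^2 * v2 \<xi>"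
proof -
  define C where "C = (v h - v 0 - h * v1 0) / h^2"
  define g where "g x = v x - v 0 - x * v1 0 - C * x^2" for x
  have "g 0 = g h" using assms by (simp add: g_def C_def)
  moreover have "continuous_on {0..h} g"
    unfolding g_def
    by (intro continuous_intros continuous_on_subset[OF cont_v]) (use assms in auto)
  moreover have D: "(g has_derivative (*) (v1 z - v1 0 - 2 * C * z)) (at z)" if "0 < z" "z < h" for z
  proof -
    have "(g has_real_derivative (v1 z - v1 0 - 2 * C * z)) (at z)"
      unfolding g_def using that assms
      by (auto intro!: derivative_eq_intros der_v)
    thus ?thesis by (simp add: has_field_derivative_def)
  qed
  ultimately obtain z where z: "0 < z" "z < h" "(*) (v1 z - v1 0 - 2 * C * z) = (\<lambda>v. 0)"
    using Rolle_deriv[of 0 h g "\<lambda>z. (*) (v1 z - v1 0 - 2 * C * z)"] assms by blast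
  have z0: "v1 z - v1 0 = 2 * C * z" using fun_cong[OF z(3), of 1] by simp
  obtain \<xi> where xi: "0 < \<xi>" "\<xi> < z" "v1 z - v1 0 = (z - 0) * v2 \<xi>"
    using mvt_v1[of 0 z] z assms by auto
  have "2 * C = v2 \<xi>" using z0 xi z by (metis diff_zero mult.commute mult_right_cancel less_irrefl)
  hence "2 * (v h - v 0 - h * v1 0) = h^2 * v2 \<xi>" using assms by (simp add: C_def field_simps)
  thus ?thesis using xi z by auto
qed

lemma sdiff2:
  assumes "0 < h" "0 \<le> a - h" "a + h \<le> T"
  shows "\<exists>\<xi>. a - h < \<xi> \<and> \<xi> < a + h \<and> v (a + h) - 2 * v a + v (a - h) = h^2 * v2 \<xi>"
proof -
  define C where "C = (v (a + h) - 2 * v a + v (a - h)) / h^2"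
  define g where "g x = v (a + x) - 2 * v a + v (a - x) - C * x^2" for x
  have "g 0 = g h" using assms by (simp add: g_def C_def)
  moreover have "continuous_on {0..h} g"
    unfolding g_def
    by (intro continuous_intros continuous_on_compose2[OF cont_v]) (use assms in auto)
  moreover have D: "(g has_derivative (*) (v1 (a + z) - v1 (a - z) - 2 * C * z)) (at z)" if "0 < z" "z < h" for z
  proof -
    have A: "((\<lambda>x. v (a + x)) has_real_derivative v1 (a + z) * 1) (at z)"
      by (rule DERIV_chain2[OF der_v]) (use that assms in \<open>auto intro!: derivative_eq_intros\<close>)
    have B: "((\<lambda>x. v (a - x)) has_real_derivative v1 (a - z) * (-1)) (at z)"
      by (rule DERIV_chain2[OF der_v]) (use that assms in \<open>auto intro!: derivative_eq_intros\<close>)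
    have "(g has_real_derivative (v1 (a + z) - v1 (a - z) - 2 * C * z)) (at z)"
      unfolding g_def using that assms
      by (auto intro!: derivative_eq_intros A B)
    thus ?thesis by (simp add: has_field_derivative_def)
  qed
  ultimately obtain z where z: "0 < z" "z < h" "(*) (v1 (a + z) - v1 (a - z) - 2 * C * z) = (\<lambda>v. 0)"
    using Rolle_deriv[of 0 h g "\<lambda>z. (*) (v1 (a + z) - v1 (a - z) - 2 * C * z)"] assms by blast
  have z0: "v1 (a + z) - v1 (a - z) = 2 * C * z" using fun_cong[OF z(3), of 1] by simp
  obtain \<xi> where xi: "a - z < \<xi>" "\<xi> < a + z" "v1 (a + z) - v1 (a - z) = ((a + z) - (a - z)) * v2 \<xi>"
    using mvt_v1[of "a - z" "a + z"] z assms by auto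
  have "2 * z * C = 2 * z * v2 \<xi>" using z0 xi by (simp add: algebra_simps)
  hence "C = v2 \<xi>" using z by simp
  hence "v (a + h) - 2 * v a + v (a - h) = h^2 * v2 \<xi>" using assms by (simp add: C_def field_simps)
  moreover have "a - h < \<xi>" "\<xi> < a + h" using xi z by auto
  ultimately show ?thesis by blast
qed

lemma SI:
  assumes "0 \<le> a" "a \<le> b" "b \<le> T"
  shows "set_integrable lborel {a..b} (\<lambda>s. \<bar>v3 s\<bar>)"
proof -
  have 1: "set_integrable lborel {a<..b} (\<lambda>s. \<bar>v3 s\<bar>)"
    by (rule set_integrable_subset[OF L1]) (use assms in auto)
  have e: "(\<lambda>x. indicator {a} x *\<^sub>R \<bar>v3 x\<bar>) = (\<lambda>x. \<bar>v3 a\<bar> * indicator {a} x :: real)"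
    by (auto simp: indicator_def)
  have "integrable lborel (\<lambda>x. \<bar>v3 a\<bar> * indicator {a} x :: real)"
    by (intro integrable_mult_right integrable_real_indicator) auto
  hence 2: "set_integrable lborel {a} (\<lambda>s. \<bar>v3 s\<bar>)"
    unfolding set_integrable_def e .
  have "{a..b} = {a} \<union> {a<..b}" using assms by auto
  then show ?thesis using set_integrable_Un[OF 2 1] by auto
qed

lemma osc_pos:
  assumes "0 < x" "x \<le> y" "a \<le> x" "y \<le> b" "0 \<le> a" "b \<le> T"
  shows "\<bar>v2 y - v2 x\<bar> \<le> integral {a..b} (\<lambda>s. \<bar>v3 s\<bar>)"
proof -
  have sub: "{x..y} \<subseteq> {0<..T}" using assms by auto
  have "(v3 has_integral (v2 y - v2 x)) {x..y}"
  proof (rule fundamental_theorem_of_calculus[OF \<open>x \<le> y\<close>])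
    fix t assume "t \<in> {x..y}"
    hence "(v2 has_real_derivative v3 t) (at t within {x..y})"
      using has_field_derivative_subset[OF d3 sub] sub by blast
    thus "(v2 has_vector_derivative v3 t) (at t within {x..y})"
      by (simp add: has_real_derivative_iff_has_vector_derivative)
  qed
  hence eq: "integral {x..y} v3 = v2 y - v2 x" and int3: "v3 integrable_on {x..y}"
    by (auto simp: integral_unique has_integral_integrable)
  have cabs: "continuous_on {x..y} (\<lambda>s. \<bar>v3 s\<bar>)"
    by (intro continuous_intros continuous_on_subset[OF c3 sub])
  have "\<bar>v2 y - v2 x\<bar> \<le> integral {x..y} (\<lambda>s. \<bar>v3 s\<bar>)"
    using integral_norm_bound_integral[OF int3 integrable_continuous_interval[OF cabs]] eq by auto
  also have "\<dots> \<le> integral {a..b} (\<lambda>s. \<bar>v3 s\<bar>)"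
    by (rule integral_subset_le)
       (use assms set_borel_integral_eq_integral(1)[OF SI, of a b] integrable_continuous_interval[OF cabs] in auto)
  finally show ?thesis .
qed

lemma osc:
  assumes "0 \<le> x" "x \<le> y" "a \<le> x" "y \<le> b" "0 \<le> a" "b \<le> T"
  shows "\<bar>v2 y - v2 x\<bar> \<le> integral {a..b} (\<lambda>s. \<bar>v3 s\<bar>)"
proof (cases "x > 0")
  case True thus ?thesis using osc_pos assms by blast
next
  case False
  hence x0: "x = 0" using assms by auto
  hence a0: "a = 0" using assms by auto
  define I where "I = integral {a..b} (\<lambda>s. \<bar>v3 s\<bar>)"
  have I0: "0 \<le> I" unfolding I_def
    by (rule integral_nonneg) (use set_borel_integral_eq_integral(1)[OF SI, of a b] assms in auto)
  show ?thesis
  proof (rule ccontr)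
    assume "\<not> ?thesis"
    hence gt: "\<bar>v2 y - v2 0\<bar> > I" using x0 I_def by auto
    hence y0: "y > 0" using I0 assms x0 by (cases "y = 0") auto
    define e where "e = \<bar>v2 y - v2 0\<bar> - I"
    have "e > 0" using gt e_def by auto
    then obtain d where d: "d > 0" "\<And>x'. x' \<in> {0..T} \<Longrightarrow> dist x' 0 < d \<Longrightarrow> dist (v2 x') (v2 0) < e"
      using c2 unfolding continuous_on_iff using T_pos by (metis atLeastAtMost_iff less_eq_real_def)
    define x' where "x' = min (d/2) y"
    have x': "0 < x'" "x' \<le> y" "dist x' 0 < d" using d y0 by (auto simp: x'_def dist_real_def)
    have "x' \<in> {0..T}" using x' assms by auto
    hence "\<bar>v2 x' - v2 0\<bar> < e" using d x' by (auto simp: dist_real_def)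
    moreover have "\<bar>v2 y - v2 x'\<bar> \<le> I" unfolding I_def
      by (rule osc_pos) (use x' assms a0 in auto)
    ultimately show False using e_def by linarith
  qed
qed

definition A :: "nat \<Rightarrow> real" where
  "A j = (LINT \<theta>:{0..1}|lborel. \<bar>v3 (real j * \<tau> + \<theta> * \<tau>)\<bar>)"

lemma A_eq: "\<tau> * A j = (LINT s:{real j * \<tau>..real j * \<tau> + \<tau>}|lborel. \<bar>v3 s\<bar>)"
proof -
  have ind: "indicator {real j * \<tau>..real j * \<tau> + \<tau>} (real j * \<tau> + \<tau> * x) = (indicator {0..1} x :: real)" for x
    using tau by (auto simp: indicator_def zero_le_mult_iff mult_le_cancel_left1)
  have "(LINT s:{real j * \<tau>..real j * \<tau> + \<tau>}|lborel. \<bar>v3 s\<bar>)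
      = \<bar>\<tau>\<bar> *\<^sub>R (\<integral>x. indicator {real j * \<tau>..real j * \<tau> + \<tau>} (real j * \<tau> + \<tau> * x) *\<^sub>R \<bar>v3 (real j * \<tau> + \<tau> * x)\<bar> \<partial>lborel)"
    unfolding set_lebesgue_integral_def
    by (rule lborel_integral_real_affine) (use tau in auto)
  also have "\<dots> = \<tau> * A j"
    unfolding A_def set_lebesgue_integral_def ind using tau by (simp add: mult.commute)
  finally show ?thesis by simp
qed

lemma osc_A:
  assumes "j < n" "real j * \<tau> \<le> x" "x \<le> real j * \<tau> + \<tau>" "real j * \<tau> \<le> y" "y \<le> real j * \<tau> + \<tau>"
  shows "\<bar>v2 y - v2 x\<bar> \<le> \<tau> * A j"
proof -
  have b: "real j * \<tau> + \<tau> \<le> T"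
  proof -
    have "real j + 1 \<le> real n" using assms by simp
    hence "(real j + 1) * \<tau> \<le> real n * \<tau>" using tau by (intro mult_right_mono) auto
    thus ?thesis by (simp add: algebra_simps)
  qed
  have a: "0 \<le> real j * \<tau>" using tau by simp
  have I: "integral {real j * \<tau>..real j * \<tau> + \<tau>} (\<lambda>s. \<bar>v3 s\<bar>) = \<tau> * A j"
    using set_borel_integral_eq_integral(2)[OF SI[OF a _ b]] A_eq tau by simp
  show ?thesis
  proof (cases "x \<le> y")
    case True thus ?thesis using osc[OF _ True assms(2) assms(5) a b] a assms I by auto
  next
    case False
    hence "\<bar>v2 x - v2 y\<bar> \<le> \<tau> * A j" using osc[of y x "real j * \<tau>" "real j * \<tau> + \<tau>"] a assms I b by auto
    thus ?thesis by (simp add: abs_minus_commute)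
  qed
qed

definition M :: real where "M = Max (A ` {0..n-1})"

lemma A_le_M: "j < n \<Longrightarrow> A j \<le> M"
  unfolding M_def by (rule Max_ge) auto

lemma A_nonneg: "0 \<le> A j"
  unfolding A_def set_lebesgue_integral_def by (rule integral_nonneg_AE) (auto simp: indicator_def)

lemma M_nonneg: "0 \<le> M" using A_le_M[of 0] A_nonneg[of 0] n by auto

definition c :: "nat \<Rightarrow> real" where
  "c k = (if k = 1 then 2 * (v \<tau> - v 0 - \<tau> * v1 0) / \<tau>^2
          else (v (real k * \<tau>) - 2 * v (real (k - 1) * \<tau>) + v (real (k - 2) * \<tau>)) / \<tau>^2)"

lemma core:
  assumes "1 \<le> k" "k \<le> n" "real (k - 1) * \<tau> \<le> s" "s \<le> real k * \<tau>"
  shows "\<bar>v2 s - c k\<bar> \<le> 2 * \<tau> * M"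
proof (cases "k = 1")
  case True
  have "\<tau> \<le> T" using n tau by simp
  then obtain \<xi> where xi: "0 < \<xi>" "\<xi> < \<tau>" "2 * (v \<tau> - v 0 - \<tau> * v1 0) = \<tau>^2 * v2 \<xi>"
    using taylor2[of \<tau>] tau by auto
  have ck: "c k = v2 \<xi>" using True xi tau by (simp add: c_def field_simps)
  have "\<bar>v2 s - v2 \<xi>\<bar> \<le> \<tau> * A 0"
    by (rule osc_A) (use xi assms True n in auto)
  also have "\<dots> \<le> \<tau> * M" using A_le_M[of 0] n tau by (intro mult_left_mono) auto
  also have "\<dots> \<le> 2 * \<tau> * M" using M_nonneg tau by auto
  finally show ?thesis using ck by simp
next
  case False
  hence k2: "k \<ge> 2" using assms by auto
  define a where "a = real (k - 1) * \<tau>"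
  have h1: "real k * \<tau> = a + \<tau>" using k2 by (simp add: a_def of_nat_diff algebra_simps)
  have h2: "real (k - 2) * \<tau> = a - \<tau>" using k2 by (simp add: a_def of_nat_diff algebra_simps)
  have h3: "real (k - 2) * \<tau> + \<tau> = a" using h2 by simp
  have "a - \<tau> \<ge> 0" using h2[symmetric] tau by simp
  moreover have "a + \<tau> \<le> T" using h1[symmetric] assms tau by (simp add: mult_right_mono)
  ultimately obtain \<xi> where xi: "a - \<tau> < \<xi>" "\<xi> < a + \<tau>"
      "v (a + \<tau>) - 2 * v a + v (a - \<tau>) = \<tau>^2 * v2 \<xi>"
    using sdiff2[of \<tau> a] tau by auto
  have "c k = (v (a + \<tau>) - 2 * v a + v (a - \<tau>)) / \<tau>^2"
    unfolding c_def h1 h2 a_def[symmetric] using False by simp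
  hence ck: "c k = v2 \<xi>" using xi(3) tau by simp
  have Mk1: "\<tau> * A (k - 1) \<le> \<tau> * M" using A_le_M[of "k-1"] assms tau by (intro mult_left_mono) auto
  have Mk2: "\<tau> * A (k - 2) \<le> \<tau> * M" using A_le_M[of "k-2"] assms tau k2 by (intro mult_left_mono) auto
  have s1: "a \<le> s" "s \<le> a + \<tau>" using assms h1 a_def by auto
  have tM: "0 \<le> \<tau> * M" using M_nonneg tau by simp
  have j1: "k - 1 < n" using assms by simp
  have j2: "k - 2 < n" using assms by simp
  have h4: "real (k - 1) * \<tau> + \<tau> = a + \<tau>" unfolding a_def by simp
  show ?thesis
  proof (cases "a \<le> \<xi>")
    case True
    have "\<bar>v2 s - v2 \<xi>\<bar> \<le> \<tau> * A (k - 1)"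
      apply (rule osc_A[OF j1])
      unfolding h4 a_def[symmetric] using True xi s1 by linarith+
    thus ?thesis using ck Mk1 tM by linarith
  next
    case False
    have "\<bar>v2 s - v2 a\<bar> \<le> \<tau> * A (k - 1)"
      apply (rule osc_A[OF j1])
      unfolding h4 a_def[symmetric] using s1 tau by linarith+
    moreover have "\<bar>v2 a - v2 \<xi>\<bar> \<le> \<tau> * A (k - 2)"
      apply (rule osc_A[OF j2])
      unfolding h2 h3 using xi False tau by linarith+
    ultimately show ?thesis using ck Mk1 Mk2 by linarith
  qed
qed

lemma w_int:
  assumes "0 \<le> a" "a \<le> b" "b \<le> T"
  shows "((\<lambda>s. (T - s) powr (1 - \<beta>)) has_integral
           ((T - a) powr (2 - \<beta>) - (T - b) powr (2 - \<beta>)) / (2 - \<beta>)) {a..b}"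
proof -
  define F where "F x = - ((T - x) powr (2 - \<beta>)) / (2 - \<beta>)" for x
  have "((\<lambda>s. (T - s) powr (1 - \<beta>)) has_integral (F b - F a)) {a..b}"
  proof (rule fundamental_theorem_of_calculus_interior[OF \<open>a \<le> b\<close>])
    have "continuous_on {a..b} (\<lambda>x. (T - x) powr (2 - \<beta>))"
      by (rule continuous_on_powr') (use assms beta2 in \<open>auto intro!: continuous_intros\<close>)
    thus "continuous_on {a..b} F" unfolding F_def
      by (intro continuous_on_divide continuous_on_minus continuous_on_const) (use beta2 in auto)
  next
    fix x assume x: "x \<in> {a<..<b}"
    have D: "((\<lambda>x. (T - x) powr (2 - \<beta>)) has_real_derivative
              (2 - \<beta>) * (T - x) powr (2 - \<beta> - of_nat 1) * (-1)) (at x)"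
      by (rule DERIV_fun_powr) (use x assms in \<open>auto intro!: derivative_eq_intros\<close>)
    have e: "2 - \<beta> - of_nat 1 = 1 - \<beta>" by simp
    have "(F has_real_derivative - ((2 - \<beta>) * (T - x) powr (2 - \<beta> - of_nat 1) * (-1)) / (2 - \<beta>)) (at x)"
      unfolding F_def by (intro DERIV_cdivide DERIV_minus D)
    moreover have "- ((2 - \<beta>) * (T - x) powr (2 - \<beta> - of_nat 1) * (-1)) / (2 - \<beta>) = (T - x) powr (1 - \<beta>)"
      using beta2 unfolding e by simp
    ultimately have "(F has_real_derivative (T - x) powr (1 - \<beta>)) (at x)" by simp
    thus "(F has_vector_derivative (T - x) powr (1 - \<beta>)) (at x)"
      by (simp add: has_real_derivative_iff_has_vector_derivative)
  qed
  moreover have "F b - F a = ((T - a) powr (2 - \<beta>) - (T - b) powr (2 - \<beta>)) / (2 - \<beta>)"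
    unfolding F_def by (simp add: diff_divide_distrib)
  ultimately show ?thesis by simp
qed

lemma split_int:
  fixes f :: "real \<Rightarrow> real"
  assumes "f integrable_on {0..T}"
  shows "integral {0..T} f = (\<Sum>k=1..n. integral {real (k - 1) * \<tau>..real k * \<tau>} f)"
proof -
  have "m \<le> n \<Longrightarrow> integral {0..real m * \<tau>} f = (\<Sum>k=1..m. integral {real (k - 1) * \<tau>..real k * \<tau>} f)" for m
  proof (induction m)
    case 0 thus ?case by simp
  next
    case (Suc m)
    have le: "real m * \<tau> \<le> real (Suc m) * \<tau>" "real (Suc m) * \<tau> \<le> T"
      using tau Suc.prems by (auto intro: mult_right_mono)
    have int: "f integrable_on {0..real (Suc m) * \<tau>}"
      by (rule integrable_on_subinterval[OF assms]) (use le tau in auto)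
    have "integral {0..real (Suc m) * \<tau>} f = integral {0..real m * \<tau>} f + integral {real m * \<tau>..real (Suc m) * \<tau>} f"
      using Henstock_Kurzweil_Integration.integral_combine[OF _ le(1) int] tau by simp
    thus ?case using Suc by simp
  qed
  thus ?thesis by simp
qed

lemma Gamma3: "Gamma (3 - \<beta>) = (2 - \<beta>) * Gamma (2 - \<beta>)"
proof -
  have "2 - \<beta> \<notin> \<int>\<^sub>\<le>\<^sub>0" using beta2 by (auto elim!: nonpos_Ints_cases)
  from Gamma_plus1[OF this] show ?thesis by (simp add: algebra_simps)
qed

lemma G2_pos: "Gamma (2 - \<beta>) > 0" using beta2 by simp

lemma b_eq: "b_coef \<beta> j = ((real j + 1) powr (2 - \<beta>) - real j powr (2 - \<beta>)) / Gamma (3 - \<beta>)"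
  by (simp add: b_coef_def)

lemma caputo_eq:
  shows "(\<lambda>s. v2 s * (T - s) powr (1 - \<beta>)) integrable_on {0..T}"
    and "caputo_D \<beta> v2 T = (1 / Gamma (2 - \<beta>)) * integral {0..T} (\<lambda>s. v2 s * (T - s) powr (1 - \<beta>))"
proof -
  have eqf: "(\<lambda>s. v2 s / (T - s) powr (\<beta> - 1)) = (\<lambda>s. v2 s * (T - s) powr (1 - \<beta>))"
  proof (rule ext)
    fix s
    have "(T - s) powr (1 - \<beta>) = inverse ((T - s) powr (\<beta> - 1))"
      using powr_minus[of "T - s" "\<beta> - 1"] by simp
    thus "v2 s / (T - s) powr (\<beta> - 1) = v2 s * (T - s) powr (1 - \<beta>)" by (simp add: divide_inverse)
  qed
  have Wint: "(\<lambda>s. (T - s) powr (1 - \<beta>)) integrable_on {0..T}"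
    using w_int[of 0 T] T_pos by (auto intro: has_integral_integrable)
  have Wabs: "(\<lambda>s. (T - s) powr (1 - \<beta>)) absolutely_integrable_on {0..T}"
    by (rule nonnegative_absolutely_integrable_1[OF Wint]) simp
  have abs: "(\<lambda>s. v2 s * (T - s) powr (1 - \<beta>)) absolutely_integrable_on {0..T}"
    by (rule absolutely_integrable_bounded_measurable_product_real[OF _ _ _ Wabs])
       (auto intro: continuous_imp_measurable_on_sets_lebesgue[OF c2] compact_imp_bounded compact_continuous_image[OF c2])
  have 1: "(\<lambda>s. indicator {0..T} s *\<^sub>R v2 s) \<in> borel_measurable borel"
    by (rule borel_measurable_continuous_on_indicator[OF _ c2]) auto
  have 2: "(\<lambda>s. (T - s) powr (1 - \<beta>)) \<in> borel_measurable borel" by measurable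
  have "(\<lambda>s. (indicator {0..T} s *\<^sub>R v2 s) * (T - s) powr (1 - \<beta>)) \<in> borel_measurable borel"
    using 1 2 by (rule borel_measurable_times)
  moreover have "(\<lambda>s. (indicator {0..T} s *\<^sub>R v2 s) * (T - s) powr (1 - \<beta>))
      = (\<lambda>s. indicator {0..T} s *\<^sub>R (v2 s * (T - s) powr (1 - \<beta>)))"
    by (auto simp: indicator_def)
  ultimately have meas: "(\<lambda>s. indicator {0..T} s *\<^sub>R (v2 s * (T - s) powr (1 - \<beta>))) \<in> borel_measurable lborel"
    by simp
  have si: "set_integrable lborel {0..T} (\<lambda>s. v2 s * (T - s) powr (1 - \<beta>))"
    using abs integrable_completion[OF meas] unfolding set_integrable_def by simp
  show "(\<lambda>s. v2 s * (T - s) powr (1 - \<beta>)) integrable_on {0..T}"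
    using set_borel_integral_eq_integral(1)[OF si] .
  show "caputo_D \<beta> v2 T = (1 / Gamma (2 - \<beta>)) * integral {0..T} (\<lambda>s. v2 s * (T - s) powr (1 - \<beta>))"
    unfolding caputo_D_def eqf set_borel_integral_eq_integral(2)[OF si] ..
qed

lemma aux: "(G::real) \<noteq> 0 \<Longrightarrow> q \<noteq> 0 \<Longrightarrow> (X * t - Y * t) / q = G * (t * ((X - Y) / (q * G)))"
  by (simp add: field_simps)

lemma Wk:
  assumes "1 \<le> k" "k \<le> n"
  shows "((\<lambda>s. (T - s) powr (1 - \<beta>)) has_integral (Gamma (2 - \<beta>) * (\<tau> powr (2 - \<beta>) * b_coef \<beta> (n - k))))
           {real (k - 1) * \<tau>..real k * \<tau>}"
proof -
  define m where "m = real (n - k)"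
  have m0: "0 \<le> m" by (simp add: m_def)
  have e1: "T - real (k - 1) * \<tau> = (m + 1) * \<tau>" using assms by (simp add: m_def of_nat_diff algebra_simps)
  have e2: "T - real k * \<tau> = m * \<tau>" using assms by (simp add: m_def of_nat_diff algebra_simps)
  have le: "0 \<le> real (k - 1) * \<tau>" "real (k - 1) * \<tau> \<le> real k * \<tau>" "real k * \<tau> \<le> T"
    using tau assms by (auto intro: mult_right_mono)
  have "((\<lambda>s. (T - s) powr (1 - \<beta>)) has_integral ((T - real (k - 1) * \<tau>) powr (2 - \<beta>) - (T - real k * \<tau>) powr (2 - \<beta>)) / (2 - \<beta>))
           {real (k - 1) * \<tau>..real k * \<tau>}"
    by (rule w_int[OF le])
  moreover have "((T - real (k - 1) * \<tau>) powr (2 - \<beta>) - (T - real k * \<tau>) powr (2 - \<beta>)) / (2 - \<beta>)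
      = Gamma (2 - \<beta>) * (\<tau> powr (2 - \<beta>) * b_coef \<beta> (n - k))"
    unfolding e1 e2 b_eq Gamma3 m_def[symmetric] powr_mult
    by (rule aux) (use G2_pos beta2 in \<open>auto simp: less_imp_neq dest: sym\<close>)
  ultimately show ?thesis by simp
qed

lemma approx_eq:
  "Delta_t \<beta> \<tau> v n - 2 * b_coef \<beta> (n - 1) / \<tau> powr (\<beta> - 1) * v1 0
     = (\<Sum>k=1..n. c k * (\<tau> powr (2 - \<beta>) * b_coef \<beta> (n - k)))"
proof -
  define P where "P = \<tau> powr \<beta>"
  have P0: "P > 0" using tau by (simp add: P_def)
  have p1: "\<tau> powr (2 - \<beta>) = \<tau>^2 / P" using tau by (simp add: P_def powr_diff)
  have p2: "\<tau> powr (\<beta> - 1) = P / \<tau>" using tau by (simp add: P_def powr_diff powr_one)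
  have c1: "c 1 = 2 * (v \<tau> - v 0 - \<tau> * v1 0) / \<tau>^2" by (simp add: c_def)
  have spl: "(\<Sum>k=1..n. c k * (\<tau> powr (2 - \<beta>) * b_coef \<beta> (n - k)))
      = c 1 * (\<tau> powr (2 - \<beta>) * b_coef \<beta> (n - 1)) + (\<Sum>k=2..n. c k * (\<tau> powr (2 - \<beta>) * b_coef \<beta> (n - k)))"
    using sum.atLeast_Suc_atMost[of 1 n] n by (simp add: numeral_2_eq_2)
  have S: "(\<Sum>k=2..n. c k * (\<tau> powr (2 - \<beta>) * b_coef \<beta> (n - k)))
      = (1 / P) * (\<Sum>k=2..n. b_coef \<beta> (n - k) *
          (v (real k * \<tau>) - 2 * v (real (k - 1) * \<tau>) + v (real (k - 2) * \<tau>)))"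
    unfolding sum_distrib_left
  proof (rule sum.cong[OF refl])
    fix k assume "k \<in> {2..n}"
    hence "k \<noteq> 1" by auto
    thus "c k * (\<tau> powr (2 - \<beta>) * b_coef \<beta> (n - k)) = 1 / P * (b_coef \<beta> (n - k) *
          (v (real k * \<tau>) - 2 * v (real (k - 1) * \<tau>) + v (real (k - 2) * \<tau>)))"
      unfolding c_def p1 using tau P0 by (simp add: field_simps)
  qed
  show ?thesis
    unfolding spl S unfolding c1 Delta_t_def P_def[symmetric] p1 p2 using tau P0 by (simp add: field_simps)
qed

lemma main:
  "\<bar>caputo_D \<beta> v2 T - (Delta_t \<beta> \<tau> v n - 2 * b_coef \<beta> (n - 1) / \<tau> powr (\<beta> - 1) * v1 0)\<bar>
     \<le> 9 * T powr (2 - \<beta>) / Gamma (3 - \<beta>) * M * \<tau>"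
proof -
  define W where "W = (\<lambda>s. (T - s) powr (1 - \<beta>))"
  define I where "I k = {real (k - 1) * \<tau>..real k * \<tau>}" for k
  define G where "G = Gamma (2 - \<beta>)"
  define t where "t k = \<tau> powr (2 - \<beta>) * b_coef \<beta> (n - k)" for k
  define r where "r k = integral (I k) (\<lambda>s. v2 s * W s) - c k * (G * t k)" for k
  have G0: "G > 0" using G2_pos by (simp add: G_def)
  have W0: "0 \<le> W s" for s by (simp add: W_def)
  have intV: "(\<lambda>s. v2 s * W s) integrable_on {0..T}" using caputo_eq(1) by (simp add: W_def)
  have Isub: "I k \<subseteq> {0..T}" if "k \<in> {1..n}" for k
    using that tau by (auto simp: I_def intro: order_trans[OF _ mult_right_mono[of k n]])
  have WI: "(W has_integral (G * t k)) (I k)" if "k \<in> {1..n}" for k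
    using Wk[of k] that by (simp add: W_def I_def G_def t_def)
  have hk: "((\<lambda>s. (v2 s - c k) * W s) has_integral r k) (I k)" if "k \<in> {1..n}" for k
  proof -
    have intk: "(\<lambda>s. v2 s * W s) integrable_on I k"
      unfolding I_def by (rule integrable_on_subinterval[OF intV]) (use Isub[OF that] in \<open>simp add: I_def\<close>)
    have "((\<lambda>s. v2 s * W s - c k * W s) has_integral r k) (I k)"
      unfolding r_def
      by (rule has_integral_diff[OF integrable_integral[OF intk] has_integral_mult_right[OF WI[OF that]]])
    thus ?thesis by (simp add: algebra_simps)
  qed
  have bound: "\<bar>r k\<bar> \<le> 2 * \<tau> * M * (G * t k)" if "k \<in> {1..n}" for k
  proof -
    have "norm (integral (I k) (\<lambda>s. (v2 s - c k) * W s)) \<le> integral (I k) (\<lambda>s. 2 * \<tau> * M * W s)"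
    proof (rule integral_norm_bound_integral)
      show "(\<lambda>s. (v2 s - c k) * W s) integrable_on I k" using hk[OF that] by blast
      show "(\<lambda>s. 2 * \<tau> * M * W s) integrable_on I k" using has_integral_mult_right[OF WI[OF that]] by blast
      fix s assume "s \<in> I k"
      hence "\<bar>v2 s - c k\<bar> \<le> 2 * \<tau> * M" using core[of k s] that by (auto simp: I_def)
      thus "norm ((v2 s - c k) * W s) \<le> 2 * \<tau> * M * W s"
        using W0[of s] by (simp add: abs_mult mult_right_mono)
    qed
    moreover have "integral (I k) (\<lambda>s. (v2 s - c k) * W s) = r k" using hk[OF that] by (rule integral_unique)
    moreover have "integral (I k) (\<lambda>s. 2 * \<tau> * M * W s) = 2 * \<tau> * M * (G * t k)"
      using has_integral_mult_right[OF WI[OF that]] by (rule integral_unique)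
    moreover have "integral (I k) W = G * t k" using WI[OF that] by (rule integral_unique)
    ultimately show ?thesis by simp
  qed
  have cap: "caputo_D \<beta> v2 T = (1 / G) * (\<Sum>k=1..n. integral (I k) (\<lambda>s. v2 s * W s))"
    using caputo_eq(2) split_int[OF intV] by (simp add: W_def I_def G_def)
  have app: "Delta_t \<beta> \<tau> v n - 2 * b_coef \<beta> (n - 1) / \<tau> powr (\<beta> - 1) * v1 0 = (\<Sum>k=1..n. c k * t k)"
    using approx_eq by (simp add: t_def)
  have diff: "caputo_D \<beta> v2 T - (Delta_t \<beta> \<tau> v n - 2 * b_coef \<beta> (n - 1) / \<tau> powr (\<beta> - 1) * v1 0)
      = (1 / G) * (\<Sum>k=1..n. r k)"
    unfolding cap app r_def sum_subtractf right_diff_distrib sum_distrib_left using G0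
    by simp
  have sumW: "(\<Sum>k=1..n. G * t k) = T powr (2 - \<beta>) / (2 - \<beta>)"
  proof -
    have "integral {0..T} W = (\<Sum>k=1..n. integral (I k) W)"
      unfolding I_def by (rule split_int) (use w_int[of 0 T] T_pos in \<open>auto simp: W_def\<close>)
    also have "\<dots> = (\<Sum>k=1..n. G * t k)"
      by (rule sum.cong[OF refl]) (rule integral_unique[OF WI])
    finally have "(\<Sum>k=1..n. G * t k) = integral {0..T} W" by simp
    also have "\<dots> = T powr (2 - \<beta>) / (2 - \<beta>)"
      using integral_unique[OF w_int[of 0 T]] T_pos by (simp add: W_def)
    finally show ?thesis .
  qed
  have "\<bar>(1 / G) * (\<Sum>k=1..n. r k)\<bar> \<le> (1 / G) * (\<Sum>k=1..n. \<bar>r k\<bar>)"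
    using G0 sum_abs[of r "{1..n}"] by (simp add: abs_mult divide_right_mono)
  also have "\<dots> \<le> (1 / G) * (\<Sum>k=1..n. 2 * \<tau> * M * (G * t k))"
    using G0 bound by (intro mult_left_mono sum_mono) auto
  also have "\<dots> = (1 / G) * (2 * \<tau> * M) * (\<Sum>k=1..n. G * t k)"
    by (simp add: sum_distrib_left mult.assoc)
  also have "\<dots> = 2 * T powr (2 - \<beta>) / Gamma (3 - \<beta>) * M * \<tau>"
    unfolding sumW Gamma3 G_def[symmetric] using G0 beta2 by (simp add: field_simps)
  also have "\<dots> \<le> 9 * T powr (2 - \<beta>) / Gamma (3 - \<beta>) * M * \<tau>"
  proof -
    define X where "X = T powr (2 - \<beta>) / Gamma (3 - \<beta>) * M * \<tau>"
    have X0: "0 \<le> X"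
      using M_nonneg tau Gamma3 G2_pos beta2 by (simp add: X_def)
    have e29: "2 * T powr (2 - \<beta>) / Gamma (3 - \<beta>) * M * \<tau> = 2 * X"
      "9 * T powr (2 - \<beta>) / Gamma (3 - \<beta>) * M * \<tau> = 9 * X"
      by (simp_all add: X_def algebra_simps)
    show ?thesis unfolding e29 using X0 by simp
  qed
  finally show ?thesis unfolding diff .
qed

end

theorem lemma2:
  fixes \<beta> \<tau> :: real and n :: nat and v v1 v2 v3 :: "real \<Rightarrow> real"
  assumes beta: "1 < \<beta>" "\<beta> < 2"
    and tau: "\<tau> > 0"
    and n: "n \<ge> 1"
    and d1: "\<And>t. t \<in> {0..real n * \<tau>} \<Longrightarrow>
               (v has_real_derivative v1 t) (at t within {0..real n * \<tau>})"
    and d2: "\<And>t. t \<in> {0..real n * \<tau>} \<Longrightarrow>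
               (v1 has_real_derivative v2 t) (at t within {0..real n * \<tau>})"
    and c2: "continuous_on {0..real n * \<tau>} v2"
    and d3: "\<And>t. t \<in> {0<..real n * \<tau>} \<Longrightarrow>
               (v2 has_real_derivative v3 t) (at t within {0<..real n * \<tau>})"
    and c3: "continuous_on {0<..real n * \<tau>} v3"
    and L1: "set_integrable lborel {0<..real n * \<tau>} (\<lambda>t. \<bar>v3 t\<bar>)"
  shows "\<bar>caputo_D \<beta> v2 (real n * \<tau>)
           - (Delta_t \<beta> \<tau> v n - 2 * b_coef \<beta> (n - 1) / \<tau> powr (\<beta> - 1) * v1 0)\<bar>
         \<le> 9 * (real n * \<tau>) powr (2 - \<beta>) / Gamma (3 - \<beta>)
            * Max ((\<lambda>k. LINT \<theta>:{0..1}|lborel. \<bar>v3 (real k * \<tau> + \<theta> * \<tau>)\<bar>) ` {0..n - 1})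
            * \<tau>"
proof -
  interpret L2 \<beta> \<tau> n v v1 v2 v3
    by (intro L2.intro; fact assms)
  have e: "(\<lambda>k. LINT \<theta>:{0..1}|lborel. \<bar>v3 (real k * \<tau> + \<theta> * \<tau>)\<bar>) = A"
    by (rule ext) (simp add: A_def)
  show ?thesis unfolding e M_def[symmetric] by (rule main)
qed

end
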